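(* If $\mathcal{I}$ is an unboring ideal, then the ordinal $\omega^2+1$ with the order topology is in $\mathrm{FinBW}(\mathcal{I})$.
   Context: An ideal on an infinite countable set $X$ is a family $\mathcal{I}\subseteq\mathcal{P}(X)$ closed under subsets and finite unions, containing all finite subsets, with $X\notin\mathcal{I}$. A space $X$ is in $\mathrm{FinBW}(\mathcal{I})$ if $X$ is Hausdorff and for every sequence $(x_n)_{n\in\bigcup\mathcal{I}}$ in $X$ there is $A\notin\mathcal{I}$ with $(x_n)_{n\in A}$ convergent in $X$. $\mathrm{Fin}^2$: ideal on $\omega^2$ of all $A$ with only finitely many $n$ such that $\{m:(n,m)\in A\}$ is infinite. $\mathcal{BI}$: ideal on $\omega^3$ of all $A$ for which there is $k$ with $\{(j,l):(i,j,l)\in A\}\in\mathrm{Fin}^2$ for $i<k$ and finite for $i\ge k$. $\mathcal{I}\sqsubseteq\mathcal{J}$: there is a bijection $f:\bigcup\mathcal{J}\to\bigcup\mathcal{I}$ with $f^{-1}[A]\in\mathcal{J}$ for all $A\in\mathcal{I}$. $\mathcal{I}$ is unboring if $\mathcal{BI}\not\sqsubseteq\mathcal{I}$. *)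

theory Defs
  imports "HOL-Analysis.Analysis"
begin

definition ideal_on :: "'a set \<Rightarrow> 'a set set \<Rightarrow> bool" where
  "ideal_on X I \<longleftrightarrow> infinite X \<and> countable X \<and> (\<forall>A\<in>I. A \<subseteq> X)
     \<and> (\<forall>A\<in>I. \<forall>B. B \<subseteq> A \<longrightarrow> B \<in> I)
     \<and> (\<forall>A\<in>I. \<forall>B\<in>I. A \<union> B \<in> I)
     \<and> (\<forall>F. F \<subseteq> X \<longrightarrow> finite F \<longrightarrow> F \<in> I)
     \<and> X \<notin> I"

definition Fin2 :: "(nat \<times> nat) set set" where
  "Fin2 = {A. finite {n. infinite {m. (n, m) \<in> A}}}"

definition BI :: "(nat \<times> nat \<times> nat) set set" where
  "BI = {A. \<exists>k. \<forall>i. (i < k \<longrightarrow> {(j, l). (i, j, l) \<in> A} \<in> Fin2)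
                   \<and> (k \<le> i \<longrightarrow> finite {(j, l). (i, j, l) \<in> A})}"

definition ideal_below :: "'b set set \<Rightarrow> 'a set set \<Rightarrow> bool" where
  "ideal_below I J \<longleftrightarrow> (\<exists>f. bij_betw f (\<Union>J) (\<Union>I) \<and> (\<forall>A\<in>I. f -` A \<inter> \<Union>J \<in> J))"

definition unboring :: "'a set set \<Rightarrow> bool" where
  "unboring I \<longleftrightarrow> \<not> ideal_below BI I"

definition converges_on :: "'b topology \<Rightarrow> ('a \<Rightarrow> 'b) \<Rightarrow> 'a set \<Rightarrow> 'b \<Rightarrow> bool" where
  "converges_on T x A L \<longleftrightarrow> L \<in> topspace T \<and>
     (\<forall>U. openin T U \<longrightarrow> L \<in> U \<longrightarrow> finite {n \<in> A. x n \<notin> U})"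

definition FinBW :: "'a set set \<Rightarrow> 'b topology \<Rightarrow> bool" where
  "FinBW I T \<longleftrightarrow> Hausdorff_space T \<and>
     (\<forall>x. (\<forall>n\<in>\<Union>I. x n \<in> topspace T) \<longrightarrow>
        (\<exists>A. A \<subseteq> \<Union>I \<and> A \<notin> I \<and> (\<exists>L. converges_on T x A L)))"

text \<open>Pt a b stands for omega*a + b, Top for omega^2.\<close>
datatype w2p1 = Pt nat nat | Top

instantiation w2p1 :: linorder
begin

fun less_eq_w2p1 :: "w2p1 \<Rightarrow> w2p1 \<Rightarrow> bool" where
  "less_eq_w2p1 (Pt a b) (Pt c d) \<longleftrightarrow> a < c \<or> (a = c \<and> b \<le> d)"
| "less_eq_w2p1 _ Top \<longleftrightarrow> True"
| "less_eq_w2p1 Top (Pt _ _) \<longleftrightarrow> False"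

definition less_w2p1 :: "w2p1 \<Rightarrow> w2p1 \<Rightarrow> bool" where
  "less_w2p1 x y \<longleftrightarrow> x \<le> y \<and> \<not> y \<le> x"

instance
proof
  fix x y z :: w2p1
  show "x < y \<longleftrightarrow> x \<le> y \<and> \<not> y \<le> x" by (simp add: less_w2p1_def)
  show "x \<le> x" by (cases x) auto
  show "x \<le> y \<Longrightarrow> y \<le> z \<Longrightarrow> x \<le> z" by (cases x; cases y; cases z) auto
  show "x \<le> y \<Longrightarrow> y \<le> x \<Longrightarrow> x = y" by (cases x; cases y) auto
  show "x \<le> y \<or> y \<le> x" by (cases x; cases y) auto
qed

end

instantiation w2p1 :: order_topology
begin

definition open_w2p1 :: "w2p1 set \<Rightarrow> bool" where
  "open_w2p1 = generate_topology (range lessThan \<union> range greaterThan)"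

instance by standard (simp add: open_w2p1_def)

end

abbreviation omega2p1_top :: "w2p1 topology" where
  "omega2p1_top \<equiv> (euclidean :: w2p1 topology)"

end

theory Submission
  imports Defs
begin

instance w2p1 :: linorder_topology ..
lemma lt_Pt[simp]: "Pt a b < Pt c d \<longleftrightarrow> a < c \<or> (a = c \<and> b < d)" by (auto simp: less_w2p1_def)
lemma Pt_lt_Top[simp]: "Pt a b < Top" by (auto simp: less_w2p1_def)
lemma Top_nlt[simp]: "\<not> Top < p" by (cases p) (auto simp: less_w2p1_def)

definition lin :: "'a set \<Rightarrow> ('a \<Rightarrow> nat \<times> nat) \<Rightarrow> nat \<Rightarrow> nat \<Rightarrow> 'a set" where
  "lin X s i j = {n\<in>X. s n = (i, j)}"
definition sec :: "'a set \<Rightarrow> ('a \<Rightarrow> nat \<times> nat) \<Rightarrow> nat \<Rightarrow> 'a set" where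
  "sec X s i = {n\<in>X. fst (s n) = i}"
definition good :: "'a set \<Rightarrow> 'a set set \<Rightarrow> ('a \<Rightarrow> nat \<times> nat) \<Rightarrow> bool" where
  "good X I s \<longleftrightarrow> (\<forall>i j. lin X s i j \<in> I)
     \<and> (\<forall>i E. E \<subseteq> sec X s i \<longrightarrow> (\<forall>j. finite (E \<inter> lin X s i j)) \<longrightarrow> E \<in> I)
     \<and> (\<forall>E. E \<subseteq> X \<longrightarrow> (\<forall>i. finite (E \<inter> sec X s i)) \<longrightarrow> E \<in> I)"
definition full :: "'a set \<Rightarrow> ('a \<Rightarrow> nat \<times> nat) \<Rightarrow> bool" where
  "full X s \<longleftrightarrow> (\<forall>i j. infinite (lin X s i j))"

definition blk :: "nat set \<Rightarrow> nat \<Rightarrow> nat" where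
  "blk S i = (LEAST k. i \<le> enumerate S k)"

lemma blk_le: "infinite S \<Longrightarrow> i \<le> enumerate S (blk S i)"
  unfolding blk_def by (rule LeastI[of _ i]) (rule le_enumerate)

lemma blk_enum: "infinite S \<Longrightarrow> blk S (enumerate S k) = k"
  unfolding blk_def
  by (rule Least_equality) (auto simp: not_less[symmetric] enumerate_mono)

lemma blk_fin: "infinite S \<Longrightarrow> finite {i. blk S i = k}"
  by (rule finite_subset[of _ "{..enumerate S k}"]) (auto dest: blk_le[of S])

locale idl =
  fixes X :: "'a set" and I :: "'a set set"
  assumes ideal: "ideal_on X I"
begin

lemma sub: "A \<in> I \<Longrightarrow> B \<subseteq> A \<Longrightarrow> B \<in> I"
  using ideal unfolding ideal_on_def by blast
lemma un: "A \<in> I \<Longrightarrow> B \<in> I \<Longrightarrow> A \<union> B \<in> I"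
  using ideal unfolding ideal_on_def by blast
lemma fin: "finite F \<Longrightarrow> F \<subseteq> X \<Longrightarrow> F \<in> I"
  using ideal unfolding ideal_on_def by blast
lemma XnI: "X \<notin> I"
  using ideal unfolding ideal_on_def by blast
lemma cntX: "countable X"
  using ideal unfolding ideal_on_def by blast
lemma inX: "A \<in> I \<Longrightarrow> A \<subseteq> X"
  using ideal unfolding ideal_on_def by blast
lemma UI: "\<Union>I = X"
proof
  show "\<Union>I \<subseteq> X" using inX by blast
  show "X \<subseteq> \<Union>I"
  proof
    fix x assume "x \<in> X" then have "{x} \<in> I" by (intro fin) auto
    then show "x \<in> \<Union>I" by blast
  qed
qed
lemma empty: "{} \<in> I" using fin by auto

lemma Un_fin: "finite K \<Longrightarrow> (\<And>k. k \<in> K \<Longrightarrow> A k \<in> I) \<Longrightarrow> (\<Union>k\<in>K. A k) \<in> I"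
  by (induction K rule: finite_induct) (auto intro: un empty)

lemma final:
  assumes g: "good X I s" and fu: "full X s"
  shows "ideal_below BI I"
proof -
  define L where "L n = lin X s (fst (s n)) (snd (s n))" for n
  define e where "e n = to_nat_on (L n) n" for n
  define f where "f n = (fst (s n), snd (s n), e n)" for n
  have cL: "countable (lin X s i j)" for i j
    by (rule countable_subset[OF _ cntX]) (auto simp: lin_def)
  have Ln: "n \<in> X \<Longrightarrow> n \<in> L n" for n by (auto simp: L_def lin_def)
  have inj: "inj_on f X"
  proof
    fix n m assume n: "n \<in> X" and m: "m \<in> X" and fe: "f n = f m"
    then have sm: "s n = s m" by (auto simp: f_def prod_eq_iff)
    then have LL: "L n = L m" by (simp add: L_def)
    have "to_nat_on (L n) n = to_nat_on (L n) m" using fe LL by (simp add: f_def e_def)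
    moreover have "inj_on (to_nat_on (L n)) (L n)" unfolding L_def by (rule inj_on_to_nat_on[OF cL])
    ultimately show "n = m" using Ln[OF n] Ln[OF m] LL by (auto dest: inj_onD)
  qed
  have surj: "f ` X = UNIV"
  proof (safe)
    fix i j l
    let ?L = "lin X s i j"
    have inf: "infinite ?L" using fu by (simp add: full_def)
    then have ne: "?L \<noteq> {}" by auto
    define n where "n = from_nat_into ?L l"
    have nL: "n \<in> ?L" unfolding n_def by (rule from_nat_into[OF ne])
    then have sn: "s n = (i, j)" and nX: "n \<in> X" by (auto simp: lin_def)
    have "L n = ?L" by (simp add: L_def sn)
    then have "e n = l" by (simp add: e_def n_def cL inf)
    then have "f n = (i, j, l)" by (simp add: f_def sn)
    then show "(i, j, l) \<in> f ` X" using nX by (metis image_eqI)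
  qed simp
  have bij: "bij_betw f (\<Union>I) (\<Union>BI)"
  proof -
    have "\<Union>BI = UNIV"
    proof -
      have "{p} \<in> BI" for p :: "nat \<times> nat \<times> nat"
        unfolding BI_def by (rule CollectI, rule exI[of _ 0]) (auto intro: finite_subset[of _ "{(fst (snd p), snd (snd p))}"])
      then show ?thesis by blast
    qed
    then show ?thesis using inj surj UI by (simp add: bij_betw_def)
  qed
  have pre: "f -` B \<inter> \<Union>I \<in> I" if B: "B \<in> BI" for B
  proof -
    obtain k where k: "\<And>i. i < k \<Longrightarrow> {(j, l). (i, j, l) \<in> B} \<in> Fin2"
      "\<And>i. k \<le> i \<Longrightarrow> finite {(j, l). (i, j, l) \<in> B}"
      using B unfolding BI_def by blast
    define J where "J i = {j. infinite {l. (i, j, l) \<in> B}}" for i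
    have Jfin: "finite (J i)" if "i < k" for i
      using k(1)[OF that] by (simp add: Fin2_def J_def)
    define P where "P = f -` B \<inter> X"
    define E where "E i = {n \<in> P. fst (s n) = i \<and> snd (s n) \<notin> J i}" for i
    define Ei where "Ei = {n \<in> P. k \<le> fst (s n)}"
    have cov: "P \<subseteq> (\<Union>i\<in>{..<k}. \<Union>j\<in>J i. lin X s i j) \<union> (\<Union>i\<in>{..<k}. E i) \<union> Ei"
    proof
      fix n assume n: "n \<in> P"
      show "n \<in> (\<Union>i\<in>{..<k}. \<Union>j\<in>J i. lin X s i j) \<union> (\<Union>i\<in>{..<k}. E i) \<union> Ei"
      proof (cases "k \<le> fst (s n)")
        case True then show ?thesis using n by (auto simp: Ei_def)
      next
        case False
        then show ?thesis using n
          by (cases "snd (s n) \<in> J (fst (s n))")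
             (auto simp: E_def P_def lin_def prod_eq_iff intro!: bexI[of _ "fst (s n)"])
      qed
    qed
    have g1: "lin X s i j \<in> I" for i j using g by (simp add: good_def)
    have g2: "\<And>i E. E \<subseteq> sec X s i \<Longrightarrow> (\<And>j. finite (E \<inter> lin X s i j)) \<Longrightarrow> E \<in> I"
      using g by (simp add: good_def)
    have g3: "\<And>E. E \<subseteq> X \<Longrightarrow> (\<And>i. finite (E \<inter> sec X s i)) \<Longrightarrow> E \<in> I"
      using g by (simp add: good_def)
    have A1: "(\<Union>i\<in>{..<k}. \<Union>j\<in>J i. lin X s i j) \<in> I"
      by (intro Un_fin) (auto simp: Jfin g1)
    have A2: "(\<Union>i\<in>{..<k}. E i) \<in> I"
    proof (intro Un_fin)
      fix i assume "i \<in> {..<k}"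
      show "E i \<in> I"
      proof (rule g2)
        show "E i \<subseteq> sec X s i" by (auto simp: E_def P_def sec_def)
        fix j
        show "finite (E i \<inter> lin X s i j)"
        proof (cases "j \<in> J i")
          case True
          have "E i \<inter> lin X s i j = {}" using True by (auto simp: E_def lin_def prod_eq_iff)
          then show ?thesis by simp
        next
          case False
          have "E i \<inter> lin X s i j \<subseteq> to_nat_on (lin X s i j) -` {l. (i, j, l) \<in> B} \<inter> lin X s i j"
            by (auto simp: E_def P_def f_def e_def L_def lin_def prod_eq_iff)
          moreover have "finite (to_nat_on (lin X s i j) -` {l. (i, j, l) \<in> B} \<inter> lin X s i j)"
            using False by (intro finite_vimage_IntI) (auto simp: J_def cL)
          ultimately show ?thesis by (rule finite_subset)
        qed
      qed
    qed auto
    have A3: "Ei \<in> I"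
    proof (rule g3)
      show "Ei \<subseteq> X" by (auto simp: Ei_def P_def)
      fix i
      show "finite (Ei \<inter> sec X s i)"
      proof (cases "k \<le> i")
        case False
        have "Ei \<inter> sec X s i = {}" using False by (auto simp: Ei_def sec_def)
        then show ?thesis by simp
      next
        case True
        define h where "h n = (snd (s n), e n)" for n
        have "Ei \<inter> sec X s i \<subseteq> h -` {(j, l). (i, j, l) \<in> B} \<inter> sec X s i"
          by (auto simp: Ei_def P_def f_def h_def sec_def)
        moreover have "finite (h -` {(j, l). (i, j, l) \<in> B} \<inter> sec X s i)"
        proof (intro finite_vimage_IntI k(2)[OF True] inj_onI)
          fix n m assume n: "n \<in> sec X s i" and m: "m \<in> sec X s i" and hh: "h n = h m"
          then have sm: "s n = s m" by (auto simp: h_def sec_def prod_eq_iff)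
          then have LL: "L n = L m" by (simp add: L_def)
          have "to_nat_on (L n) n = to_nat_on (L n) m" using hh LL by (simp add: h_def e_def)
          moreover have "inj_on (to_nat_on (L n)) (L n)" unfolding L_def by (rule inj_on_to_nat_on[OF cL])
          moreover have "n \<in> X" "m \<in> X" using n m by (auto simp: sec_def)
          ultimately show "n = m" using Ln LL by (auto dest: inj_onD)
        qed
        ultimately show ?thesis by (rule finite_subset)
      qed
    qed
    have "P \<in> I" using cov A1 A2 A3 by (meson sub un)
    then show ?thesis by (simp add: P_def UI)
  qed
  show ?thesis unfolding ideal_below_def using bij pre by blast
qed


lemma goodD:
  assumes "good X I s"
  shows "\<And>i j. lin X s i j \<in> I"
    "\<And>i E. E \<subseteq> sec X s i \<Longrightarrow> (\<And>j. finite (E \<inter> lin X s i j)) \<Longrightarrow> E \<in> I"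
    "\<And>E. E \<subseteq> X \<Longrightarrow> (\<And>i. finite (E \<inter> sec X s i)) \<Longrightarrow> E \<in> I"
  using assms by (auto simp: good_def)

lemma goodI:
  assumes "\<And>i j. lin X s i j \<in> I"
    "\<And>i E. E \<subseteq> sec X s i \<Longrightarrow> (\<And>j. finite (E \<inter> lin X s i j)) \<Longrightarrow> E \<in> I"
    "\<And>E. E \<subseteq> X \<Longrightarrow> (\<And>i. finite (E \<inter> sec X s i)) \<Longrightarrow> E \<in> I"
  shows "good X I s"
  using assms by (auto simp: good_def)

lemma coarsen:
  assumes g: "good X I s" and gf: "\<And>k. finite {i. gg i = k}" and hf: "\<And>i m. finite {j. h i j = m}"
  shows "good X I (\<lambda>n. (gg (fst (s n)), h (fst (s n)) (snd (s n))))"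
    (is "good X I ?s")
proof (rule goodI)
  fix k m
  have "lin X ?s k m \<subseteq> (\<Union>i\<in>{i. gg i = k}. \<Union>j\<in>{j. h i j = m}. lin X s i j)"
    by (auto simp: lin_def prod_eq_iff)
  moreover have "(\<Union>i\<in>{i. gg i = k}. \<Union>j\<in>{j. h i j = m}. lin X s i j) \<in> I"
    by (intro Un_fin gf hf goodD(1)[OF g])
  ultimately show "lin X ?s k m \<in> I" by (rule sub[rotated])
next
  fix k E assume E: "E \<subseteq> sec X ?s k" and fE: "\<And>m. finite (E \<inter> lin X ?s k m)"
  have "E \<subseteq> (\<Union>i\<in>{i. gg i = k}. E \<inter> sec X s i)" using E by (auto simp: sec_def)
  moreover have "(\<Union>i\<in>{i. gg i = k}. E \<inter> sec X s i) \<in> I"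
  proof (intro Un_fin gf)
    fix i assume i: "i \<in> {i. gg i = k}"
    show "E \<inter> sec X s i \<in> I"
    proof (rule goodD(2)[OF g])
      fix j
      have "E \<inter> sec X s i \<inter> lin X s i j \<subseteq> E \<inter> lin X ?s k (h i j)"
        using i by (auto simp: lin_def sec_def prod_eq_iff)
      then show "finite (E \<inter> sec X s i \<inter> lin X s i j)" using fE by (rule finite_subset)
    qed auto
  qed
  ultimately show "E \<in> I" by (rule sub[rotated])
next
  fix E assume E: "E \<subseteq> X" and fE: "\<And>k. finite (E \<inter> sec X ?s k)"
  show "E \<in> I"
  proof (rule goodD(3)[OF g E])
    fix i
    have "E \<inter> sec X s i \<subseteq> E \<inter> sec X ?s (gg i)" by (auto simp: sec_def)
    then show "finite (E \<inter> sec X s i)" using fE by (rule finite_subset)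
  qed
qed

lemma secmerge:
  assumes g: "good X I s" and inf: "infinite {i. sec X s i \<notin> I}"
  shows "\<exists>s'. good X I s' \<and> (\<forall>k. sec X s' k \<notin> I)"
proof -
  let ?N = "{i. sec X s i \<notin> I}"
  let ?s = "\<lambda>n. (blk ?N (fst (s n)), (\<lambda>i j. j) (fst (s n)) (snd (s n)))"
  have "good X I ?s" by (rule coarsen[OF g]) (auto simp: blk_fin[OF inf])
  moreover have "sec X ?s k \<notin> I" for k
  proof
    assume a: "sec X ?s k \<in> I"
    have be: "blk ?N (enumerate ?N k) = k" by (rule blk_enum[OF inf])
    have "sec X s (enumerate ?N k) \<subseteq> sec X ?s k" using be by (auto simp: sec_def)
    then have "sec X s (enumerate ?N k) \<in> I" using a by (rule sub[rotated])
    moreover have "enumerate ?N k \<in> ?N" by (rule enumerate_in_set[OF inf])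
    ultimately show False by simp
  qed
  ultimately show ?thesis by blast
qed

lemma infrows:
  assumes g: "good X I s" and k: "sec X s k \<notin> I"
  shows "infinite {j. infinite (lin X s k j)}"
proof
  let ?J = "{j. infinite (lin X s k j)}"
  assume fJ: "finite ?J"
  define E where "E = {n\<in>sec X s k. snd (s n) \<notin> ?J}"
  have "E \<in> I"
  proof (rule goodD(2)[OF g])
    show "E \<subseteq> sec X s k" by (auto simp: E_def)
    fix j show "finite (E \<inter> lin X s k j)"
    proof (cases "j \<in> ?J")
      case True
      have "E \<inter> lin X s k j = {}" using True by (auto simp: E_def lin_def)
      then show ?thesis by simp
    next
      case False
      then show ?thesis by (auto intro: finite_subset[of _ "lin X s k j"])
    qed
  qed
  moreover have "(\<Union>j\<in>?J. lin X s k j) \<in> I" by (intro Un_fin fJ goodD(1)[OF g])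
  moreover have "sec X s k \<subseteq> (\<Union>j\<in>?J. lin X s k j) \<union> E"
    by (auto simp: E_def sec_def lin_def prod_eq_iff)
  ultimately show False using k by (meson sub un)
qed

lemma rowmerge:
  assumes g: "good X I s"
  shows "\<exists>s'. good X I s' \<and> (\<forall>n. fst (s' n) = fst (s n))
     \<and> (\<forall>k. sec X s k \<notin> I \<longrightarrow> (\<forall>m. infinite (lin X s' k m)))"
proof -
  define J where "J k = {j. infinite (lin X s k j)}" for k
  define h where "h k j = (if infinite (J k) then blk (J k) j else j)" for k j
  let ?s = "\<lambda>n. ((\<lambda>i. i) (fst (s n)), h (fst (s n)) (snd (s n)))"
  have "good X I ?s"
  proof (rule coarsen[OF g])
    fix i m show "finite {j. h i j = m}"
      by (cases "infinite (J i)") (auto simp: h_def blk_fin)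
  qed auto
  moreover have "infinite (lin X ?s k m)" if k: "sec X s k \<notin> I" for k m
  proof -
    have iJ: "infinite (J k)" using infrows[OF g k] by (simp add: J_def)
    have "enumerate (J k) m \<in> J k" by (rule enumerate_in_set[OF iJ])
    then have "infinite (lin X s k (enumerate (J k) m))" by (simp add: J_def)
    moreover have "lin X s k (enumerate (J k) m) \<subseteq> lin X ?s k m"
      by (auto simp: lin_def h_def iJ blk_enum)
    ultimately show ?thesis using finite_subset by blast
  qed
  ultimately show ?thesis by auto
qed

lemma single:
  assumes g: "good X I s" and fN: "finite {i. sec X s i \<notin> I}"
  shows "\<exists>s'. good X I s' \<and> (\<forall>n. fst (s' n) = 0)"
proof -
  let ?N = "{i. sec X s i \<notin> I}"
  define r where "r n = (if fst (s n) \<in> ?N then 2 * prod_encode (s n) else 2 * fst (s n) + 1)" for n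
  let ?s = "\<lambda>n. (0::nat, r n)"
  have secs: "sec X ?s k = (if k = 0 then X else {})" for k by (auto simp: sec_def)
  have "good X I ?s"
  proof (rule goodI)
    fix k m
    show "lin X ?s k m \<in> I"
    proof (cases "k = 0")
      case False
      then have "lin X ?s k m = {}" by (auto simp: lin_def)
      then show ?thesis by (simp add: empty)
    next
      case True
      show ?thesis
      proof (cases "even m")
        case True
        then obtain c where c: "m = 2 * c" by blast
        have "lin X ?s k m \<subseteq> lin X s (fst (prod_decode c)) (snd (prod_decode c))"
        proof
          fix n assume n: "n \<in> lin X ?s k m"
          then have nX: "n \<in> X" and rn: "r n = 2 * c" using c by (auto simp: lin_def)
          have "s n = prod_decode c"
          proof (cases "fst (s n) \<in> ?N")
            case True
            then have "prod_encode (s n) = c" using rn by (simp add: r_def)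
            then show ?thesis by (metis prod_encode_inverse)
          next
            case False
            then have "2 * fst (s n) + 1 = 2 * c" using rn by (simp add: r_def)
            then have False by presburger
            then show ?thesis ..
          qed
          then show "n \<in> lin X s (fst (prod_decode c)) (snd (prod_decode c))"
            using nX by (simp add: lin_def)
        qed
        then show ?thesis by (rule sub[OF goodD(1)[OF g]])
      next
        case False
        then obtain a where a: "m = 2 * a + 1" by (metis oddE)
        show ?thesis
        proof (cases "a \<in> ?N")
          case True
          have "lin X ?s k m = {}" using a True by (auto simp: lin_def r_def split: if_splits; presburger)
          then show ?thesis by (simp add: empty)
        next
          case False
          then have "sec X s a \<in> I" by simp
          moreover have "lin X ?s k m \<subseteq> sec X s a" using a
            by (auto simp: lin_def r_def sec_def split: if_splits; presburger)
          ultimately show ?thesis by (rule sub)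
        qed
      qed
    qed
  next
    fix k E assume E: "E \<subseteq> sec X ?s k" and fE: "\<And>m. finite (E \<inter> lin X ?s k m)"
    show "E \<in> I"
    proof (cases "k = 0")
      case False then have "E = {}" using E secs by auto
      then show ?thesis by (simp add: empty)
    next
      case True
      then have EX: "E \<subseteq> X" using E secs by auto
      define E2 where "E2 = {n\<in>E. fst (s n) \<notin> ?N}"
      have "E \<subseteq> (\<Union>i\<in>?N. E \<inter> sec X s i) \<union> E2" using EX by (auto simp: E2_def sec_def)
      moreover have "(\<Union>i\<in>?N. E \<inter> sec X s i) \<in> I"
      proof (intro Un_fin fN)
        fix i assume i: "i \<in> ?N"
        show "E \<inter> sec X s i \<in> I"
        proof (rule goodD(2)[OF g])
          fix j
          have "E \<inter> sec X s i \<inter> lin X s i j \<subseteq> E \<inter> lin X ?s k (2 * prod_encode (i, j))"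
            using i True by (auto simp: lin_def sec_def r_def)
          then show "finite (E \<inter> sec X s i \<inter> lin X s i j)" using fE by (rule finite_subset)
        qed auto
      qed
      moreover have "E2 \<in> I"
      proof (rule goodD(3)[OF g])
        show "E2 \<subseteq> X" using EX by (auto simp: E2_def)
        fix i
        have "E2 \<inter> sec X s i \<subseteq> E \<inter> lin X ?s k (2 * i + 1)"
          using True by (auto simp: lin_def sec_def r_def E2_def)
        then show "finite (E2 \<inter> sec X s i)" using fE by (rule finite_subset)
      qed
      ultimately show ?thesis by (meson sub un)
    qed
  next
    fix E assume E: "E \<subseteq> X" and fE: "\<And>k. finite (E \<inter> sec X ?s k)"
    have "finite E" using fE[of 0] E by (simp add: secs Int_absorb2)
    then show "E \<in> I" using E by (rule fin)
  qed
  then show ?thesis by (intro exI[of _ ?s]) auto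
qed

lemma pair:
  assumes g: "good X I s" and z: "\<And>n. fst (s n) = 0" and inf: "\<And>m. infinite (lin X s 0 m)"
  shows "\<exists>s'. good X I s' \<and> full X s'"
proof -
  let ?s = "\<lambda>n. prod_decode (snd (s n))"
  have L: "lin X ?s i j = lin X s 0 (prod_encode (i, j))" for i j
    using z by (auto simp: lin_def prod_eq_iff)
  have L2: "lin X s 0 m = lin X ?s (fst (prod_decode m)) (snd (prod_decode m))" for m
    by (simp add: L)
  have S0: "sec X s 0 = X" using z by (auto simp: sec_def)
  have "good X I ?s"
  proof (rule goodI)
    fix i j show "lin X ?s i j \<in> I" by (simp add: L goodD(1)[OF g])
  next
    fix i E assume E: "E \<subseteq> sec X ?s i" and fE: "\<And>j. finite (E \<inter> lin X ?s i j)"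
    show "E \<in> I"
    proof (rule goodD(2)[OF g, of E 0])
      show "E \<subseteq> sec X s 0" using E S0 by (auto simp: sec_def)
      fix m
      show "finite (E \<inter> lin X s 0 m)"
      proof (cases "fst (prod_decode m) = i")
        case True then show ?thesis using fE by (simp add: L2)
      next
        case False
        have "E \<inter> lin X s 0 m = {}" using E False by (auto simp: L2 sec_def lin_def)
        then show ?thesis by (metis finite.emptyI)
      qed
    qed
  next
    fix E assume E: "E \<subseteq> X" and fE: "\<And>i. finite (E \<inter> sec X ?s i)"
    show "E \<in> I"
    proof (rule goodD(2)[OF g, of E 0])
      show "E \<subseteq> sec X s 0" using E S0 by auto
      fix m
      have "E \<inter> lin X s 0 m \<subseteq> E \<inter> sec X ?s (fst (prod_decode m))"
        by (auto simp: L2 sec_def lin_def)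
      then show "finite (E \<inter> lin X s 0 m)" using fE by (rule finite_subset)
    qed
  qed
  moreover have "full X ?s" by (simp add: full_def L inf)
  ultimately show ?thesis by blast
qed

lemma reduce:
  assumes g: "good X I s"
  shows "ideal_below BI I"
proof (cases "finite {i. sec X s i \<notin> I}")
  case True
  obtain s1 where s1: "good X I s1" "\<And>n. fst (s1 n) = 0" using single[OF g True] by blast
  have S: "sec X s1 0 = X" using s1(2) by (auto simp: sec_def)
  obtain s2 where s2: "good X I s2" "\<And>n. fst (s2 n) = fst (s1 n)"
    "\<And>k m. sec X s1 k \<notin> I \<Longrightarrow> infinite (lin X s2 k m)"
    using rowmerge[OF s1(1)] by blast
  have "\<exists>s'. good X I s' \<and> full X s'"
    by (rule pair[OF s2(1)]) (auto simp: s2(2) s1(2) intro!: s2(3) simp: S XnI)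
  then show ?thesis using final by blast
next
  case False
  obtain s1 where s1: "good X I s1" "\<And>k. sec X s1 k \<notin> I" using secmerge[OF g False] by blast
  obtain s2 where s2: "good X I s2" "\<And>n. fst (s2 n) = fst (s1 n)"
    "\<And>k m. sec X s1 k \<notin> I \<Longrightarrow> infinite (lin X s2 k m)"
    using rowmerge[OF s1(1)] by blast
  have "full X s2" using s2(3) s1(2) by (simp add: full_def)
  then show ?thesis using final s2(1) by blast
qed


lemma base:
  fixes x :: "'a \<Rightarrow> w2p1"
  assumes conv: "\<And>A L. A \<subseteq> X \<Longrightarrow> converges_on euclidean x A L \<Longrightarrow> A \<in> I"
  shows "\<exists>s. good X I s"
proof -
  define s where "s n = (case x n of Pt a b \<Rightarrow> (a, b) | Top \<Rightarrow> (0, 0))" for n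
  have fib: "{n\<in>X. x n = p} \<in> I" for p
  proof (rule conv[of _ p])
    show "converges_on euclidean x {n\<in>X. x n = p} p"
      unfolding converges_on_def
    proof (intro conjI allI impI)
      fix U assume "openin euclidean U" "p \<in> U"
      then have "{n \<in> {n\<in>X. x n = p}. x n \<notin> U} = {}" by auto
      then show "finite {n \<in> {n\<in>X. x n = p}. x n \<notin> U}" by (metis finite.emptyI)
    qed simp
  qed auto
  have sPt: "x n = Pt a b \<Longrightarrow> s n = (a, b)" for n a b by (simp add: s_def)
  have top: "{n\<in>X. x n = Top} \<in> I" by (rule fib)
  have "good X I s"
  proof (rule goodI)
    fix a b
    have "lin X s a b \<subseteq> {n\<in>X. x n = Pt a b} \<union> {n\<in>X. x n = Top}"
    proof
      fix n assume n: "n \<in> lin X s a b"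
      then have nX: "n \<in> X" and sn: "s n = (a, b)" by (auto simp: lin_def)
      show "n \<in> {n\<in>X. x n = Pt a b} \<union> {n\<in>X. x n = Top}"
        using nX sn by (cases "x n") (auto simp: s_def)
    qed
    then show "lin X s a b \<in> I" using fib top by (meson sub un)
  next
    fix a E assume E: "E \<subseteq> sec X s a" and fE: "\<And>j. finite (E \<inter> lin X s a j)"
    define E' where "E' = {n\<in>E. x n \<noteq> Top}"
    have E'pt: "n \<in> E' \<Longrightarrow> \<exists>j. x n = Pt a j" for n
      using E by (cases "x n") (auto simp: E'_def sec_def s_def)
    have "E' \<in> I"
    proof (rule conv)
      show "E' \<subseteq> X" using E by (auto simp: E'_def sec_def)
      show "converges_on euclidean x E' (Pt (Suc a) 0)"
        unfolding converges_on_def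
      proof (intro conjI allI impI)
        fix U assume U: "openin euclidean U" and L: "Pt (Suc a) 0 \<in> U"
        have "open U" using U by (metis open_openin)
        from open_left[OF this L, of "Pt a 0"] obtain b where
          b: "b < Pt (Suc a) 0" "{b<..Pt (Suc a) 0} \<subseteq> U" by auto
        obtain c d where cd: "b = Pt c d" using b(1) by (cases b) auto
        have "{n \<in> E'. x n \<notin> U} \<subseteq> (\<Union>j\<in>{..d}. E \<inter> lin X s a j)"
        proof
          fix n assume n: "n \<in> {n \<in> E'. x n \<notin> U}"
          then obtain j where j: "x n = Pt a j" using E'pt by blast
          have "x n \<notin> {b<..Pt (Suc a) 0}" using n b(2) by blast
          then have "j \<le> d" "c \<le> a" using j cd b(1) by auto
          then show "n \<in> (\<Union>j\<in>{..d}. E \<inter> lin X s a j)"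
            using n j E by (auto simp: E'_def lin_def sec_def sPt)
        qed
        moreover have "finite (\<Union>j\<in>{..d}. E \<inter> lin X s a j)" using fE by (intro finite_UN_I) auto
        ultimately show "finite {n \<in> E'. x n \<notin> U}" by (rule finite_subset)
      qed simp
    qed
    moreover have "E \<subseteq> E' \<union> {n\<in>X. x n = Top}" using E by (auto simp: E'_def sec_def)
    ultimately show "E \<in> I" using top by (meson sub un)
  next
    fix E assume E: "E \<subseteq> X" and fE: "\<And>i. finite (E \<inter> sec X s i)"
    define E' where "E' = {n\<in>E. x n \<noteq> Top}"
    have "E' \<in> I"
    proof (rule conv)
      show "E' \<subseteq> X" using E by (auto simp: E'_def)
      show "converges_on euclidean x E' Top"
        unfolding converges_on_def
      proof (intro conjI allI impI)
        fix U assume U: "openin euclidean U" and L: "Top \<in> U"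
        have "open U" using U by (metis open_openin)
        from open_left[OF this L, of "Pt 0 0"] obtain b where
          b: "b < Top" "{b<..Top} \<subseteq> U" by auto
        obtain c d where cd: "b = Pt c d" using b(1) by (cases b) auto
        have "{n \<in> E'. x n \<notin> U} \<subseteq> (\<Union>i\<in>{..c}. E \<inter> sec X s i)"
        proof
          fix n assume n: "n \<in> {n \<in> E'. x n \<notin> U}"
          then obtain i j where j: "x n = Pt i j" by (cases "x n") (auto simp: E'_def)
          have "x n \<notin> {b<..Top}" using n b(2) by blast
          then have "i \<le> c" using j cd by auto
          then show "n \<in> (\<Union>i\<in>{..c}. E \<inter> sec X s i)"
            using n j E by (auto simp: E'_def sec_def sPt)
        qed
        moreover have "finite (\<Union>i\<in>{..c}. E \<inter> sec X s i)" using fE by (intro finite_UN_I) auto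
        ultimately show "finite {n \<in> E'. x n \<notin> U}" by (rule finite_subset)
      qed simp
    qed
    moreover have "E \<subseteq> E' \<union> {n\<in>X. x n = Top}" using E by (auto simp: E'_def)
    ultimately show "E \<in> I" using top by (meson sub un)
  qed
  then show ?thesis by blast
qed

end

theorem proposition6p2:
  fixes I :: "'a set set" and X :: "'a set"
  assumes "ideal_on X I"
    and "unboring I"
  shows "FinBW I omega2p1_top"
proof -
  interpret idl X I by standard (rule assms(1))
  have H: "Hausdorff_space (euclidean :: w2p1 topology)"
    unfolding Hausdorff_space_def using hausdorff by (auto simp: disjnt_def)
  show ?thesis
    unfolding FinBW_def
  proof (intro conjI H allI impI)
    fix x :: "'a \<Rightarrow> w2p1"
    show "\<exists>A. A \<subseteq> \<Union>I \<and> A \<notin> I \<and> (\<exists>L. converges_on euclidean x A L)"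
    proof (rule ccontr)
      assume na: "\<not> ?thesis"
      have "\<And>A L. A \<subseteq> X \<Longrightarrow> converges_on euclidean x A L \<Longrightarrow> A \<in> I"
        using na UI by blast
      then obtain s where "good X I s" using base by blast
      then have "ideal_below BI I" by (rule reduce)
      then show False using assms(2) by (simp add: unboring_def)
    qed
  qed
qed

end
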